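(* Let $0<a<m<b<1$ and let $g:\mathbb R\to\mathbb R$ be given by $g(u)=0$ if $u<a$, $g(u)=1$ if $a\le u\le b$, and $g(u)=m$ if $u>b$. Let $k:\mathbb R\to\mathbb R$ be a piecewise differentiable function satisfying: (H1) $k(x)\ge 0$ for all $x$ and $\int_{-\infty}^{\infty}k(x)\,dx=1$; (H2) $k(x)=k(-x)$ for all $x$; (H3) $k(x)>0$ for all $x\in(-\sigma,\sigma)$ for some $0<\sigma\le\infty$; (H4) for all $\lambda\in(0,1)$ and all $A,B\in\mathbb R$ with $A>B$, the function $x\mapsto k(x-A)-\lambda k(x-B)$ has fewer than $2$ sign changes; (H5) for all $\lambda\in(0,1)$ and all $A,B\in\mathbb R$ with $A>B$, the function $x\mapsto k(x-r-A)-\lambda k(x-r-B)-k(x+r+A)+\lambda k(x+r+B)$ has fewer than $4$ sign changes for all sufficiently large $r>0$. Define the operator $Q[u](x)=\int_{-\infty}^{\infty}k(x-y)\,g(u(y))\,dy$ on bounded continuous functions $u:\mathbb R\to\mathbb R$. Let $w_1(x)=\int_x^\infty k(y)\,dy$, let $c^*=\tfrac12\sup\{x\in\mathbb R: Q[w_1](x)=a\}$, and let $w_2(x)=Q[w_1](x+c^* )$. Define $W_n(x)=w_1(x-nc^* )$ for $n\ge0$ even and $W_n(x)=w_2(x-nc^* )$ for $n\ge 0$ odd. If $\|w_2\|_\infty<b$, then $W_{n+1}=Q[W_n]$ for all $n\ge 0$.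
   Context: $\|\cdot\|_\infty$ denotes the supremum norm on bounded continuous real-valued functions on $\mathbb R$. *)

theory Defs
  imports "HOL-Analysis.Analysis"
begin

definition gfun :: "real \<Rightarrow> real \<Rightarrow> real \<Rightarrow> real \<Rightarrow> real" where
  "gfun a m b u = (if u < a then 0 else if u \<le> b then 1 else m)"

definition Qop :: "(real \<Rightarrow> real) \<Rightarrow> (real \<Rightarrow> real) \<Rightarrow> (real \<Rightarrow> real) \<Rightarrow> real \<Rightarrow> real" where
  "Qop k g u x = integral\<^sup>L lborel (\<lambda>y. k (x - y) * g (u y))"

definition sign_changes_ge :: "(real \<Rightarrow> real) \<Rightarrow> nat \<Rightarrow> bool" where
  "sign_changes_ge f n \<longleftrightarrow>
     (\<exists>xs. length xs = Suc n \<and> sorted_wrt (<) xs \<and>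
           (\<forall>i<n. f (xs ! i) * f (xs ! Suc i) < 0))"

definition fewer_sign_changes :: "(real \<Rightarrow> real) \<Rightarrow> nat \<Rightarrow> bool" where
  "fewer_sign_changes f n \<longleftrightarrow> \<not> sign_changes_ge f n"

definition piecewise_differentiable :: "(real \<Rightarrow> real) \<Rightarrow> bool" where
  "piecewise_differentiable k \<longleftrightarrow>
     (\<exists>S. finite S \<and> (\<forall>x. x \<notin> S \<longrightarrow> k differentiable (at x)))"

end

theory Submission
  imports Defs
begin

definition tail :: "(real \<Rightarrow> real) \<Rightarrow> real \<Rightarrow> real" where
  "tail k t = (\<integral>s. indicator {t..} s * k s \<partial>lborel)"

definition Aof :: "(real \<Rightarrow> real) \<Rightarrow> real \<Rightarrow> real" where
  "Aof k a = Sup {y. a \<le> tail k y}"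

definition Bof :: "(real \<Rightarrow> real) \<Rightarrow> real \<Rightarrow> real" where
  "Bof k b = Sup {y. b < tail k y}"

definition Qf :: "(real \<Rightarrow> real) \<Rightarrow> real \<Rightarrow> real \<Rightarrow> real \<Rightarrow> real \<Rightarrow> real" where
  "Qf k a m b x = tail k (x - Aof k a) - (1 - m) * tail k (x - Bof k b)"

definition ff :: "(real \<Rightarrow> real) \<Rightarrow> real \<Rightarrow> real \<Rightarrow> real \<Rightarrow> real \<Rightarrow> real" where
  "ff k a m b s = k (s - Aof k a) - (1 - m) * k (s - Bof k b)"

lemma sign_struct:
  fixes f :: "real \<Rightarrow> real"
  assumes "fewer_sign_changes f 2"
  shows "(\<forall>s. f s \<ge> 0) \<or> (\<forall>s. f s \<le> 0) \<or> (\<exists>p. (\<forall>s<p. f s \<ge> 0) \<and> (\<forall>s>p. f s \<le> 0))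
     \<or> (\<exists>p. (\<forall>s<p. f s \<le> 0) \<and> (\<forall>s>p. f s \<ge> 0))"
proof -
  have noalt: False if "x0 < x1" "x1 < x2" "f x0 * f x1 < 0" "f x1 * f x2 < 0" for x0 x1 x2
  proof -
    have "sign_changes_ge f 2" unfolding sign_changes_ge_def
      by (rule exI[of _ "[x0,x1,x2]"]) (use that in \<open>auto simp: numeral_2_eq_2 less_Suc_eq\<close>)
    then show False using assms by (simp add: fewer_sign_changes_def)
  qed
  have sg: "f x * f y < 0" if "(f x > 0 \<and> f y < 0) \<or> (f x < 0 \<and> f y > 0)" for x y
    using that by (auto simp: mult_pos_neg mult_neg_pos)
  show ?thesis
  proof (cases "\<exists>u. f u > 0")
    case False then show ?thesis by (auto simp: not_less)
  next
    case True
    then obtain u where u: "f u > 0" by blast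
    show ?thesis
    proof (cases "\<exists>v. f v < 0")
      case False then show ?thesis by (auto simp: not_less)
    next
      case True
      then obtain v where v: "f v < 0" by blast
      have "u \<noteq> v" using u v by auto
      then consider "u < v" | "v < u" by linarith
      then show ?thesis
      proof cases
        case 1
        have ord: "q < n" if q: "f q > 0" and n: "f n < 0" for q n
        proof (rule ccontr)
          assume "\<not> q < n"
          moreover have "q \<noteq> n" using q n by auto
          ultimately have nq: "n < q" by linarith
          have "n \<noteq> u" using n u by auto
          then consider "n < u" | "u < n" by linarith
          then show False
          proof cases
            case 1 then show False using noalt[of n u v] \<open>u < v\<close> sg[of n u] sg[of u v] n u v by auto
          next
            case 2 then show False using noalt[of u n q] nq sg[of u n] sg[of n q] n u q by auto
          qed
        qed
        define P where "P = {q. f q > 0}"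
        have Pne: "P \<noteq> {}" using u by (auto simp: P_def)
        have Pbdd: "bdd_above P" unfolding P_def using ord[OF _ v]
          by (intro bdd_aboveI[of _ v]) (auto intro: less_imp_le)
        have "(\<forall>s<Sup P. f s \<ge> 0) \<and> (\<forall>s>Sup P. f s \<le> 0)"
        proof safe
          fix s assume "s < Sup P"
          then obtain q where "q \<in> P" "s < q" using less_cSup_iff[OF Pne Pbdd] by blast
          then show "f s \<ge> 0" using ord[of q s] by (force simp: P_def)
        next
          fix s assume "s > Sup P"
          then show "f s \<le> 0" using cSup_upper[OF _ Pbdd, of s] by (force simp: P_def)
        qed
        then show ?thesis by blast
      next
        case 2
        have ord: "n < q" if q: "f q > 0" and n: "f n < 0" for q n
        proof (rule ccontr)
          assume "\<not> n < q"
          moreover have "q \<noteq> n" using q n by auto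
          ultimately have nq: "q < n" by linarith
          have "q \<noteq> v" using q v by auto
          then consider "q < v" | "v < q" by linarith
          then show False
          proof cases
            case 1 then show False using noalt[of q v u] \<open>v < u\<close> sg[of q v] sg[of v u] q u v by auto
          next
            case 2 then show False using noalt[of v q n] nq sg[of v q] sg[of q n] n v q by auto
          qed
        qed
        define N where "N = {n. f n < 0}"
        have Nne: "N \<noteq> {}" using v by (auto simp: N_def)
        have Nbdd: "bdd_above N" unfolding N_def using ord[OF u]
          by (intro bdd_aboveI[of _ u]) (auto intro: less_imp_le)
        have "(\<forall>s<Sup N. f s \<le> 0) \<and> (\<forall>s>Sup N. f s \<ge> 0)"
        proof safe
          fix s assume "s < Sup N"
          then obtain q where "q \<in> N" "s < q" using less_cSup_iff[OF Nne Nbdd] by blast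
          then show "f s \<le> 0" using ord[of s q] by (force simp: N_def)
        next
          fix s assume "s > Sup N"
          then show "f s \<ge> 0" using cSup_upper[OF _ Nbdd, of s] by (force simp: N_def)
        qed
        then show ?thesis by blast
      qed
    qed
  qed
qed

lemma Qop_shift: "Qop k G (\<lambda>y. u (y - d)) x = Qop k G u (x - d)"
  unfolding Qop_def
  by (subst lborel_integral_real_affine[where c=1 and t=d]) (simp_all add: algebra_simps)


context
  fixes k :: "real \<Rightarrow> real"
  assumes k0: "\<And>x. k x \<ge> 0" and ki: "integrable lborel k" and k1: "integral\<^sup>L lborel k = 1"
begin

lemma km[measurable]: "k \<in> borel_measurable borel"
  using borel_measurable_integrable[OF ki] by simp

lemma int_ind: "A \<in> sets borel \<Longrightarrow> integrable lborel (\<lambda>s. indicator A s * k s)"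
  using integrable_mult_indicator[of A lborel k] ki by simp

lemma tail_nonneg: "0 \<le> tail k t"
  unfolding tail_def by (rule Bochner_Integration.integral_nonneg) (simp add: k0)

lemma tail_le1: "tail k t \<le> 1"
proof -
  have "tail k t \<le> integral\<^sup>L lborel k"
    unfolding tail_def by (rule integral_mono[OF int_ind ki]) (auto simp: k0 indicator_def)
  then show ?thesis using k1 by simp
qed

lemma tail_open: "tail k t = (\<integral>s. indicator {t<..} s * k s \<partial>lborel)"
  unfolding tail_def
  by (rule integral_cong_AE) (auto intro!: eventually_mono[OF AE_lborel_singleton[of t]] simp: indicator_def)

lemma tail_diff: assumes "t \<le> t'"
  shows "tail k t - tail k t' = (\<integral>s. indicator {t<..<t'} s * k s \<partial>lborel)"
proof (cases "t = t'")
  case True then show ?thesis by simp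
next
  case False
  have "tail k t = (\<integral>s. indicator {t<..<t'} s * k s + indicator {t'..} s * k s \<partial>lborel)"
    unfolding tail_open using assms False
    by (intro Bochner_Integration.integral_cong) (auto simp: indicator_def)
  also have "\<dots> = (\<integral>s. indicator {t<..<t'} s * k s \<partial>lborel) + tail k t'"
    unfolding tail_def by (rule Bochner_Integration.integral_add) (auto intro: int_ind)
  finally show ?thesis by simp
qed

lemma tail_antimono: assumes "t \<le> t'" shows "tail k t' \<le> tail k t"
proof -
  have "0 \<le> (\<integral>s. indicator {t<..<t'} s * k s \<partial>lborel)"
    by (rule Bochner_Integration.integral_nonneg) (simp add: k0)
  then show ?thesis using tail_diff[OF assms] by simp
qed

lemma tail_cont: "continuous (at t) (tail k)"
proof (rule continuous_at_sequentiallyI)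
  fix u :: "nat \<Rightarrow> real" assume u: "u \<longlonglongrightarrow> t"
  show "(\<lambda>n. tail k (u n)) \<longlonglongrightarrow> tail k t"
    unfolding tail_def
  proof (rule integral_dominated_convergence[where w=k])
    show "AE x in lborel. (\<lambda>n. indicator {u n..} x * k x) \<longlonglongrightarrow> indicator {t..} x * k x"
    proof (rule eventually_mono[OF AE_lborel_singleton[of t]])
      fix x assume "x \<noteq> t"
      then consider "x < t" | "x > t" by linarith
      then show "(\<lambda>n. indicator {u n..} x * k x) \<longlonglongrightarrow> indicator {t..} x * k x"
      proof cases
        case 1
        then have "eventually (\<lambda>n. x < u n) sequentially" using order_tendstoD(1)[OF u] by blast
        then have "eventually (\<lambda>n. indicator {u n..} x * k x = indicator {t..} x * k x) sequentially"
          by eventually_elim (use 1 in \<open>auto simp: indicator_def\<close>)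
        then show ?thesis by (rule tendsto_eventually)
      next
        case 2
        then have "eventually (\<lambda>n. u n < x) sequentially" using order_tendstoD(2)[OF u] by blast
        then have "eventually (\<lambda>n. indicator {u n..} x * k x = indicator {t..} x * k x) sequentially"
          by eventually_elim (use 2 in \<open>auto simp: indicator_def\<close>)
        then show ?thesis by (rule tendsto_eventually)
      qed
    qed
  qed (auto simp: ki k0 indicator_def)
qed

lemma tail_top: "((\<lambda>t. tail k (t + c)) \<longlongrightarrow> 0) at_top"
proof -
  have "((\<lambda>t. integral\<^sup>L lborel (\<lambda>s. indicator {t + c..} s * k s)) \<longlongrightarrow> integral\<^sup>L lborel (\<lambda>s. 0 * k s)) at_top"
  proof (rule integral_dominated_convergence_at_top[where w=k and M=lborel and s="\<lambda>t s. indicator {t + c..} s * k s" and f="\<lambda>s. 0 * k s"])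
    show "AE x in lborel. ((\<lambda>i. indicator {i + c..} x * k x) \<longlongrightarrow> 0 * k x) at_top"
    proof (rule AE_I2)
      fix x
      have "eventually (\<lambda>i. indicator {i + c..} x * k x = 0 * k x) at_top"
        using eventually_gt_at_top[of "x - c"] by eventually_elim (auto simp: indicator_def)
      then show "((\<lambda>i. indicator {i + c..} x * k x) \<longlongrightarrow> 0 * k x) at_top"
        by (rule tendsto_eventually)
    qed
  qed (auto simp: ki k0 indicator_def)
  then show ?thesis by (simp add: tail_def)
qed

lemma tail_bot: "((\<lambda>t. tail k (c - t)) \<longlongrightarrow> 1) at_top"
proof -
  have "((\<lambda>t. integral\<^sup>L lborel (\<lambda>s. indicator {c - t..} s * k s)) \<longlongrightarrow> integral\<^sup>L lborel k) at_top"
  proof (rule integral_dominated_convergence_at_top[where w=k and M=lborel and s="\<lambda>t s. indicator {c - t..} s * k s" and f=k])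
    show "AE x in lborel. ((\<lambda>i. indicator {c - i..} x * k x) \<longlongrightarrow> k x) at_top"
    proof (rule AE_I2)
      fix x
      have "eventually (\<lambda>i. indicator {c - i..} x * k x = k x) at_top"
        using eventually_gt_at_top[of "c - x"] by eventually_elim (auto simp: indicator_def)
      then show "((\<lambda>i. indicator {c - i..} x * k x) \<longlongrightarrow> k x) at_top"
        by (rule tendsto_eventually)
    qed
  qed (auto simp: ki k0 indicator_def)
  then show ?thesis by (simp add: tail_def k1)
qed

lemma conv_le: "(\<integral>y. k (x - y) * indicator {..A} y \<partial>lborel) = tail k (x - A)"
proof -
  have "(\<integral>y. k (x - y) * indicator {..A} y \<partial>lborel) = (\<integral>y. k (x - (x + (-1) * y)) * indicator {..A} (x + (-1) * y) \<partial>lborel)"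
    by (subst lborel_integral_real_affine[where c="-1" and t=x]) auto
  also have "\<dots> = tail k (x - A)" unfolding tail_def
    by (intro Bochner_Integration.integral_cong) (auto simp: indicator_def)
  finally show ?thesis .
qed

lemma conv_less: "(\<integral>y. k (x - y) * indicator {..<A} y \<partial>lborel) = tail k (x - A)"
proof -
  have "(\<integral>y. k (x - y) * indicator {..<A} y \<partial>lborel) = (\<integral>y. k (x - (x + (-1) * y)) * indicator {..<A} (x + (-1) * y) \<partial>lborel)"
    by (subst lborel_integral_real_affine[where c="-1" and t=x]) auto
  also have "\<dots> = tail k (x - A)" unfolding tail_open
    by (intro Bochner_Integration.integral_cong) (auto simp: indicator_def)
  finally show ?thesis .
qed

lemma shift: "(\<integral>s. indicator {t<..<t'} s * k s \<partial>lborel) = (\<integral>s. indicator {t + c<..<t' + c} s * k (s - c) \<partial>lborel)"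
  by (subst lborel_integral_real_affine[where c=1 and t="-c"]) (auto simp: indicator_def intro!: Bochner_Integration.integral_cong)


lemma tail_cont_on[continuous_intros]: "continuous_on S f \<Longrightarrow> continuous_on S (\<lambda>x. tail k (f x))"
  by (rule continuous_on_compose2[of UNIV "tail k"]) (auto intro!: continuous_at_imp_continuous_on tail_cont)

lemma int_refl: "integrable lborel (\<lambda>y. k (x - y))"
  using lborel_integrable_real_affine[OF ki, of "-1" x] by simp

lemma int_shift_ind: "I \<in> sets borel \<Longrightarrow> integrable lborel (\<lambda>s. indicator I s * k (s - c))"
  using integrable_mult_indicator[of I lborel "\<lambda>s. k (s - c)"] lborel_integrable_real_affine[OF ki, of 1 "-c"]
  by simp


context
  fixes a m b :: real
  assumes abm: "0 < a" "a < m" "m < b" "b < 1"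
    and H4': "\<And>A B. A > B \<Longrightarrow> fewer_sign_changes (\<lambda>x. k (x - A) - (1 - m) * k (x - B)) 2"
begin

lemma tail_diff_shift: assumes "x1 \<le> x2"
  shows "tail k (x1 - c) - tail k (x2 - c) = (\<integral>s. indicator {x1<..<x2} s * k (s - c) \<partial>lborel)"
  using tail_diff[of "x1 - c" "x2 - c"] shift[of "x1 - c" "x2 - c" c] assms by simp

lemma tail_cont_UNIV: "continuous_on UNIV (tail k)"
  by (auto intro!: continuous_at_imp_continuous_on tail_cont)

lemma tail_eventually_small: assumes "0 < e" obtains N where "\<And>t. t \<ge> N \<Longrightarrow> tail k t < e"
proof -
  have "eventually (\<lambda>t. tail k (t + 0) < e) at_top" using order_tendstoD(2)[OF tail_top assms] .
  then show ?thesis using that by (auto simp: eventually_at_top_linorder)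
qed

lemma tail_eventually_big: assumes "e < 1" obtains y where "e < tail k y"
proof -
  have "eventually (\<lambda>t. e < tail k (0 - t)) at_top" using order_tendstoD(1)[OF tail_bot assms] .
  then show ?thesis using that by (auto simp: eventually_at_top_linorder)
qed

lemma A_char: "a \<le> tail k y \<longleftrightarrow> y \<le> Aof k a"
proof -
  define D where "D = {y. a \<le> tail k y}"
  obtain y0 where "a < tail k y0" using tail_eventually_big abm by (meson less_trans)
  then have ne: "D \<noteq> {}" unfolding D_def using less_imp_le by blast
  obtain N where N: "\<And>t. t \<ge> N \<Longrightarrow> tail k t < a" using tail_eventually_small abm(1) by blast
  have bdd: "bdd_above D"
  proof (rule bdd_aboveI[of _ N])
    fix x assume "x \<in> D"
    then show "x \<le> N" using N[of x] abm by (cases "x \<le> N") (auto simp: D_def)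
  qed
  have cl: "closed D" unfolding D_def by (intro closed_Collect_le continuous_on_const tail_cont_UNIV)
  have "Sup D \<in> D" by (rule closed_contains_Sup[OF ne bdd cl])
  then have "a \<le> tail k (Sup D)" by (simp add: D_def)
  moreover have "y \<le> Sup D" if "a \<le> tail k y" using cSup_upper[OF _ bdd, of y] that by (simp add: D_def)
  ultimately show ?thesis unfolding Aof_def D_def[symmetric]
    using tail_antimono[of y "Sup D"] by auto
qed

lemma B_char: "b < tail k y \<longleftrightarrow> y < Bof k b"
proof -
  define D where "D = {y. b < tail k y}"
  obtain y0 where "b < tail k y0" using tail_eventually_big abm by blast
  then have ne: "D \<noteq> {}" by (auto simp: D_def)
  obtain N where N: "\<And>t. t \<ge> N \<Longrightarrow> tail k t < b" using tail_eventually_small abm by (meson less_trans)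
  have bdd: "bdd_above D"
  proof (rule bdd_aboveI[of _ N])
    fix x assume "x \<in> D"
    then show "x \<le> N" using N[of x] abm by (cases "x \<le> N") (auto simp: D_def)
  qed
  have op: "open D" unfolding D_def by (intro open_Collect_less continuous_on_const tail_cont_UNIV)
  have notin: "Sup D \<notin> D"
  proof
    assume "Sup D \<in> D"
    then obtain e where e: "e > 0" "ball (Sup D) e \<subseteq> D" using op openE by blast
    then have "Sup D + e/2 \<in> D" by (auto simp: dist_real_def)
    then have "Sup D + e/2 \<le> Sup D" using cSup_upper[OF _ bdd] by blast
    then show False using e by simp
  qed
  show ?thesis unfolding Bof_def D_def[symmetric]
  proof
    assume "b < tail k y"
    then have "y \<in> D" by (simp add: D_def)
    then show "y < Sup D" using cSup_upper[OF _ bdd, of y] notin by (cases "y = Sup D") auto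
  next
    assume "y < Sup D"
    then obtain y' where "y' \<in> D" "y < y'" using less_cSup_iff[OF ne bdd] by blast
    then show "b < tail k y" using tail_antimono[of y y'] by (auto simp: D_def)
  qed
qed

lemma B_le_A: "Bof k b \<le> Aof k a"
proof (rule ccontr)
  assume "\<not> ?thesis"
  then have "(Aof k a + Bof k b)/2 < Bof k b" "\<not> (Aof k a + Bof k b)/2 \<le> Aof k a" by auto
  then show False using A_char[of "(Aof k a + Bof k b)/2"] B_char[of "(Aof k a + Bof k b)/2"] abm by linarith
qed

lemma g_tail: "gfun a m b (tail k y) = indicator {..Aof k a} y - (1 - m) * indicator {..<Bof k b} y"
  using A_char[of y] B_char[of y] abm B_le_A
  by (auto simp: gfun_def indicator_def)

lemma Q_formula: "Qop k (gfun a m b) (tail k) x = Qf k a m b x"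
proof -
  have "Qop k (gfun a m b) (tail k) x =
     (\<integral>y. k (x - y) * indicator {..Aof k a} y - (1 - m) * (k (x - y) * indicator {..<Bof k b} y) \<partial>lborel)"
    unfolding Qop_def g_tail by (simp add: algebra_simps)
  also have "\<dots> = (\<integral>y. k (x - y) * indicator {..Aof k a} y \<partial>lborel) - (1 - m) * (\<integral>y. k (x - y) * indicator {..<Bof k b} y \<partial>lborel)"
    by (subst Bochner_Integration.integral_diff) (auto intro!: integrable_real_mult_indicator int_refl)
  also have "\<dots> = Qf k a m b x" by (simp add: conv_le conv_less Qf_def)
  finally show ?thesis .
qed

lemma Qf_cont: "continuous_on UNIV (Qf k a m b)"
  unfolding Qf_def by (intro continuous_intros)

lemma Qf_top: "(Qf k a m b \<longlongrightarrow> 0) at_top"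
proof -
  have "((\<lambda>t. tail k (t + - Aof k a) - (1 - m) * tail k (t + - Bof k b)) \<longlongrightarrow> 0 - (1 - m) * 0) at_top"
    by (intro tendsto_intros tail_top)
  moreover have "Qf k a m b = (\<lambda>t. tail k (t + - Aof k a) - (1 - m) * tail k (t + - Bof k b))"
    by (rule ext) (simp add: Qf_def)
  ultimately show ?thesis by simp
qed

lemma Qf_bot: "((\<lambda>t. Qf k a m b (- t)) \<longlongrightarrow> m) at_top"
proof -
  have "((\<lambda>t. tail k (- Aof k a - t) - (1 - m) * tail k (- Bof k b - t)) \<longlongrightarrow> 1 - (1 - m) * 1) at_top"
    by (intro tendsto_intros tail_bot)
  moreover have "(\<lambda>t. tail k (- Aof k a - t) - (1 - m) * tail k (- Bof k b - t)) = (\<lambda>t. Qf k a m b (- t))"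
  proof (rule ext)
    fix t
    have e: "- t - Aof k a = - Aof k a - t" "- t - Bof k b = - Bof k b - t" by simp_all
    show "tail k (- Aof k a - t) - (1 - m) * tail k (- Bof k b - t) = Qf k a m b (- t)"
      unfolding Qf_def by (simp only: e)
  qed
  ultimately show ?thesis by simp
qed

lemma Qf_diff: assumes "x1 \<le> x2"
  shows "Qf k a m b x1 - Qf k a m b x2 = (\<integral>s. indicator {x1<..<x2} s * (k (s - Aof k a) - (1 - m) * k (s - Bof k b)) \<partial>lborel)"
proof -
  let ?A = "Aof k a" and ?B = "Bof k b"
  have "Qf k a m b x1 - Qf k a m b x2 = (tail k (x1 - ?A) - tail k (x2 - ?A)) - (1 - m) * (tail k (x1 - ?B) - tail k (x2 - ?B))"
    by (simp add: Qf_def algebra_simps)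
  also have "\<dots> = (\<integral>s. indicator {x1<..<x2} s * k (s - ?A) \<partial>lborel) - (1 - m) * (\<integral>s. indicator {x1<..<x2} s * k (s - ?B) \<partial>lborel)"
    using assms by (simp add: tail_diff_shift)
  also have "\<dots> = (\<integral>s. indicator {x1<..<x2} s * k (s - ?A) - (1 - m) * (indicator {x1<..<x2} s * k (s - ?B)) \<partial>lborel)"
    by (subst Bochner_Integration.integral_diff) (auto intro!: int_shift_ind)
  also have "\<dots> = (\<integral>s. indicator {x1<..<x2} s * (k (s - ?A) - (1 - m) * k (s - ?B)) \<partial>lborel)"
    by (simp add: algebra_simps)
  finally show ?thesis .
qed


lemma Qf_dec: assumes "x1 \<le> x2" "\<And>s. x1 < s \<Longrightarrow> s < x2 \<Longrightarrow> 0 \<le> ff k a m b s"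
  shows "Qf k a m b x2 \<le> Qf k a m b x1"
proof -
  have "0 \<le> (\<integral>s. indicator {x1<..<x2} s * ff k a m b s \<partial>lborel)"
    by (rule Bochner_Integration.integral_nonneg) (use assms(2) in \<open>auto simp: indicator_def\<close>)
  then show ?thesis using Qf_diff[OF assms(1)] by (simp add: ff_def)
qed

lemma Qf_inc: assumes "x1 \<le> x2" "\<And>s. x1 < s \<Longrightarrow> s < x2 \<Longrightarrow> ff k a m b s \<le> 0"
  shows "Qf k a m b x1 \<le> Qf k a m b x2"
proof -
  have "0 \<le> (\<integral>s. - (indicator {x1<..<x2} s * ff k a m b s) \<partial>lborel)"
    by (rule Bochner_Integration.integral_nonneg) (use assms(2) in \<open>auto simp: indicator_def\<close>)
  then show ?thesis using Qf_diff[OF assms(1)] by (simp add: ff_def)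
qed

lemma lowbd: assumes "\<And>y z. y \<le> z \<Longrightarrow> z \<le> x \<Longrightarrow> Qf k a m b y \<le> Qf k a m b z"
  shows "m \<le> Qf k a m b x"
proof -
  have "eventually (\<lambda>t. Qf k a m b (-t) \<le> Qf k a m b x) at_top"
    using eventually_ge_at_top[of "-x"] by eventually_elim (auto intro: assms)
  then show ?thesis by (rule tendsto_le[OF _ tendsto_const Qf_bot, rotated]) simp
qed

lemma upbd: assumes "\<And>y z. x \<le> y \<Longrightarrow> y \<le> z \<Longrightarrow> Qf k a m b y \<le> Qf k a m b z"
  shows "Qf k a m b x \<le> 0"
proof -
  have "eventually (\<lambda>t. Qf k a m b x \<le> Qf k a m b t) at_top"
    using eventually_ge_at_top[of "x"] by eventually_elim (auto intro: assms)
  then show ?thesis by (rule tendsto_le[OF _ Qf_top tendsto_const, rotated]) simp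
qed

lemma ff_struct:
  "(\<forall>s. ff k a m b s \<ge> 0) \<or> (\<forall>s. ff k a m b s \<le> 0)
     \<or> (\<exists>p. (\<forall>s<p. ff k a m b s \<ge> 0) \<and> (\<forall>s>p. ff k a m b s \<le> 0))
     \<or> (\<exists>p. (\<forall>s<p. ff k a m b s \<le> 0) \<and> (\<forall>s>p. ff k a m b s \<ge> 0))"
proof (cases "Bof k b < Aof k a")
  case True
  have "fewer_sign_changes (ff k a m b) 2"
    using H4'[OF True] by (simp add: ff_def[abs_def])
  then show ?thesis by (rule sign_struct)
next
  case False
  then have "Bof k b = Aof k a" using B_le_A by simp
  then have "\<forall>s. ff k a m b s \<ge> 0" using abm by (simp add: ff_def algebra_simps k0)
  then show ?thesis by blast
qed

lemma level: "a \<le> Qf k a m b x \<longleftrightarrow> x \<le> Sup {x. Qf k a m b x = a}"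
proof -
  let ?Q = "Qf k a m b"
  define L where "L = {x. ?Q x = a}"
  have cont: "continuous_on S ?Q" for S using Qf_cont continuous_on_subset by blast
  have "eventually (\<lambda>t. a < ?Q (-t)) at_top" using order_tendstoD(1)[OF Qf_bot] abm by simp
  then obtain x0 where x0: "a < ?Q x0" by (auto simp: eventually_at_top_linorder)
  have "eventually (\<lambda>t. ?Q t < a) at_top" using order_tendstoD(2)[OF Qf_top] abm by simp
  then obtain N where N: "\<And>t. t \<ge> N \<Longrightarrow> ?Q t < a" by (auto simp: eventually_at_top_linorder)
  have cross: "\<exists>y. x \<le> y \<and> ?Q y = a" if "a \<le> ?Q x" for x
  proof -
    have "?Q (max x N) \<le> a" using N[of "max x N"] by simp
    from IVT2'[OF this that _ cont] show ?thesis by auto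
  qed
  have ne: "L \<noteq> {}" using cross[of x0] x0 by (auto simp: L_def)
  have bdd: "bdd_above L"
  proof (rule bdd_aboveI[of _ N])
    fix x assume "x \<in> L"
    then show "x \<le> N" using N[of x] by (cases "x \<le> N") (auto simp: L_def)
  qed
  have cl: "closed L" unfolding L_def by (intro closed_Collect_eq cont continuous_on_const)
  have SL: "Sup L \<in> L" by (rule closed_contains_Sup[OF ne bdd cl])
  then have QS: "?Q (Sup L) = a" by (simp add: L_def)
  have above: "?Q x < a" if "x > Sup L" for x
  proof (rule ccontr)
    assume "\<not> ?Q x < a"
    then obtain y where "x \<le> y" "?Q y = a" using cross[of x] by auto
    then have "y \<le> Sup L" using cSup_upper[OF _ bdd, of y] by (simp add: L_def)
    then show False using that \<open>x \<le> y\<close> by simp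
  qed
  have below: "a \<le> ?Q x" if "x < Sup L" for x
  proof -
    from ff_struct consider "\<forall>s. ff k a m b s \<ge> 0" | "\<forall>s. ff k a m b s \<le> 0"
      | "\<exists>p. (\<forall>s<p. ff k a m b s \<ge> 0) \<and> (\<forall>s>p. ff k a m b s \<le> 0)"
      | "\<exists>p. (\<forall>s<p. ff k a m b s \<le> 0) \<and> (\<forall>s>p. ff k a m b s \<ge> 0)" by blast
    then show ?thesis
    proof cases
      case 1
      then have "?Q (Sup L) \<le> ?Q x" using that by (intro Qf_dec) auto
      then show ?thesis using QS by simp
    next
      case 2
      then have "m \<le> ?Q x" by (intro lowbd Qf_inc) auto
      then show ?thesis using abm by simp
    next
      case 3
      then obtain p where p1: "\<And>s. s < p \<Longrightarrow> ff k a m b s \<ge> 0" and p2: "\<And>s. s > p \<Longrightarrow> ff k a m b s \<le> 0" by blast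
      have "Sup L < p"
      proof (rule ccontr)
        assume "\<not> Sup L < p"
        then have "?Q (Sup L) \<le> 0" by (intro upbd Qf_inc p2) auto
        then show False using QS abm by simp
      qed
      then have "?Q (Sup L) \<le> ?Q x" using that by (intro Qf_dec p1) auto
      then show ?thesis using QS by simp
    next
      case 4
      then obtain p where p1: "\<And>s. s < p \<Longrightarrow> ff k a m b s \<le> 0" and p2: "\<And>s. s > p \<Longrightarrow> ff k a m b s \<ge> 0" by blast
      show ?thesis
      proof (cases "x \<le> p")
        case True
        then have "m \<le> ?Q x" by (intro lowbd Qf_inc p1) auto
        then show ?thesis using abm by simp
      next
        case False
        then have "?Q (Sup L) \<le> ?Q x" using that by (intro Qf_dec p2) auto
        then show ?thesis using QS by simp
      qed
    qed
  qed
  show ?thesis unfolding L_def[symmetric]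
    using above[of x] below[of x] QS by (cases "x < Sup L"; cases "x = Sup L") auto
qed

end
end
theorem theorem1:
  fixes a m b :: real and k :: "real \<Rightarrow> real"
    and w1 w2 :: "real \<Rightarrow> real" and cstar :: real and W :: "nat \<Rightarrow> real \<Rightarrow> real"
  assumes abm: "0 < a" "a < m" "m < b" "b < 1"
    and pd: "piecewise_differentiable k"
    and H1: "\<forall>x. k x \<ge> 0" "integrable lborel k" "integral\<^sup>L lborel k = 1"
    and H2: "\<forall>x. k x = k (- x)"
    and H3: "\<exists>\<sigma>::ereal. 0 < \<sigma> \<and> (\<forall>x. ereal \<bar>x\<bar> < \<sigma> \<longrightarrow> k x > 0)"
    and H4: "\<forall>l A B. 0 < l \<and> l < 1 \<and> A > B \<longrightarrow>
               fewer_sign_changes (\<lambda>x. k (x - A) - l * k (x - B)) 2"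
    and H5: "\<forall>l A B. 0 < l \<and> l < 1 \<and> A > B \<longrightarrow>
               (\<forall>\<^sub>F r in at_top. fewer_sign_changes
                  (\<lambda>x. k (x - r - A) - l * k (x - r - B) - k (x + r + A) + l * k (x + r + B)) 4)"
    and w1_def: "w1 = (\<lambda>x. set_lebesgue_integral lborel {x..} k)"
    and c_def: "cstar = Sup {x. Qop k (gfun a m b) w1 x = a} / 2"
    and w2_def: "w2 = (\<lambda>x. Qop k (gfun a m b) w1 (x + cstar))"
    and W_def: "W = (\<lambda>n x. if even n then w1 (x - real n * cstar) else w2 (x - real n * cstar))"
    and small: "(SUP x. \<bar>w2 x\<bar>) < b"
  shows "\<forall>n. W (Suc n) = Qop k (gfun a m b) (W n)"
proof -
  have k0: "\<And>x. 0 \<le> k x" using H1(1) by simp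
  note ki = H1(2) and k1 = H1(3)
  have H4': "\<And>A B. A > B \<Longrightarrow> fewer_sign_changes (\<lambda>x. k (x - A) - (1 - m) * k (x - B)) 2"
    using H4[rule_format, of "1 - m"] abm by auto
  have w1t: "w1 = tail k" by (rule ext) (simp add: w1_def tail_def set_lebesgue_integral_def)
  have Qeq: "Qop k (gfun a m b) w1 = Qf k a m b"
    by (rule ext) (simp add: w1t Q_formula[OF k0 ki k1 abm H4'])
  have lev: "a \<le> Qf k a m b x \<longleftrightarrow> x \<le> 2 * cstar" for x
  proof -
    have "2 * cstar = Sup {x. Qf k a m b x = a}" using c_def Qeq by simp
    then show ?thesis using level[OF k0 ki k1 abm H4', of x] by simp
  qed
  have w2q: "w2 x = Qf k a m b (x + cstar)" for x by (simp add: w2_def Qeq)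
  have bnd: "\<bar>Qf k a m b x\<bar> \<le> 1" for x
  proof -
    let ?s = "tail k (x - Aof k a)" and ?t = "tail k (x - Bof k b)"
    have "0 \<le> ?s" "?s \<le> 1" "0 \<le> ?t" "?t \<le> 1"
      using tail_nonneg[OF k0 ki k1] tail_le1[OF k0 ki k1] by auto
    moreover have "0 \<le> (1 - m) * ?t" using \<open>0 \<le> ?t\<close> abm by simp
    moreover have "(1 - m) * ?t \<le> 1 - m" using \<open>?t \<le> 1\<close> abm by (simp add: mult_left_le)
    ultimately show ?thesis using abm unfolding Qf_def abs_le_iff by linarith
  qed
  have bdd: "bdd_above (range (\<lambda>x. \<bar>w2 x\<bar>))"
    by (rule bdd_aboveI2[of _ _ 1]) (simp add: w2q bnd)
  have w2b: "w2 y < b" for y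
  proof -
    have "\<bar>w2 y\<bar> \<le> (SUP x. \<bar>w2 x\<bar>)" by (rule cSUP_upper[OF _ bdd]) simp
    then show ?thesis using small by simp
  qed
  have gw2: "gfun a m b (w2 y) = indicator {..cstar} y" for y
  proof -
    have "a \<le> w2 y \<longleftrightarrow> y \<le> cstar" using lev[of "y + cstar"] by (simp add: w2q)
    then show ?thesis using w2b[of y] by (auto simp: gfun_def indicator_def)
  qed
  have Qw2: "Qop k (gfun a m b) w2 z = w1 (z - cstar)" for z
    unfolding Qop_def gw2 w1t by (rule conv_le[OF k0 ki k1])
  show ?thesis
  proof (intro allI ext)
    fix n x
    show "W (Suc n) x = Qop k (gfun a m b) (W n) x"
    proof (cases "even n")
      case True
      have e: "x - real (Suc n) * cstar + cstar = x - real n * cstar" by (simp add: algebra_simps)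
      have "W n = (\<lambda>y. w1 (y - real n * cstar))" using True by (simp add: W_def)
      then have "Qop k (gfun a m b) (W n) x = Qop k (gfun a m b) w1 (x - real n * cstar)"
        by (simp add: Qop_shift)
      also have "\<dots> = w2 (x - real (Suc n) * cstar)" by (simp only: w2_def e)
      also have "\<dots> = W (Suc n) x" using True by (simp add: W_def)
      finally show ?thesis ..
    next
      case False
      have e: "x - real n * cstar - cstar = x - real (Suc n) * cstar" by (simp add: algebra_simps)
      have "W n = (\<lambda>y. w2 (y - real n * cstar))" using False by (simp add: W_def)
      then have "Qop k (gfun a m b) (W n) x = Qop k (gfun a m b) w2 (x - real n * cstar)"
        by (simp add: Qop_shift)
      also have "\<dots> = w1 (x - real (Suc n) * cstar)" by (simp only: Qw2 e)
      also have "\<dots> = W (Suc n) x" using False by (simp add: W_def)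
      finally show ?thesis ..
    qed
  qed
qed

end
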